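(* There exist $t_1, t_2 \in \mathsf{Topo}$ such that $t_1$ embeds in $t_2$ and $|t_1| = |t_2|$ (equal numbers of leaves), but for all $q_1 \in \mathsf{PIFOTree}(t_1)$ and $q_2 \in \mathsf{PIFOTree}(t_2)$, $q_1$ does not simulate $q_2$, i.e., $q_2 \preceq q_1$ does not hold.
   Context: Fix a set $\mathsf{Pkt}$ of packets and a totally ordered set $\mathsf{Rk}$ of ranks (smaller is more favorable). Assume $\mathsf{Pkt}$ is infinite and $\mathsf{Rk}$ has no least and no greatest element. PIFOs: for a set $S$, a PIFO over $S$ is a finite sequence of pairs $(s,r) \in S\times\mathsf{Rk}$ in insertion order; $\mathsf{PIFO}(S)$ is the set of these. $\mathsf{push}_{\mathsf{PIFO}}(p,s,r)$ appends $(s,r)$. $\mathsf{pop}_{\mathsf{PIFO}}(p)$ is undefined if $p$ is empty; otherwise it removes the entry of minimal rank (earliest-inserted among ties) and returns its element together with the rest. Topologies: $\mathsf{Topo}$ is the smallest set with $* \in \mathsf{Topo}$ and $\mathsf{Node}(\vec t)\in\mathsf{Topo}$ for every $n\in\mathbb{N}$, $\vec t\in\mathsf{Topo}^n$. Number of leaves: $|*|=1$, $|\mathsf{Node}(\vec t)| = \sum_i |\vec t[i]|$. PIFO trees: $\mathsf{Leaf}(p)\in\mathsf{PIFOTree}( * )$ for $p\in\mathsf{PIFO}(\mathsf{Pkt})$; $\mathsf{Internal}(\vec q,p)\in\mathsf{PIFOTree}(\mathsf{Node}(\vec t))$ whenever $\vec t\in\mathsf{Topo}^n$, $p\in\mathsf{PIFO}(\{1,\dots,n\})$,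 $\vec q[i]\in\mathsf{PIFOTree}(\vec t[i])$. $\vec q[q'/i]$ replaces the $i$-th entry by $q'$. pop (partial): $\mathsf{pop}(\mathsf{Leaf}(p)) = (pkt,\mathsf{Leaf}(p'))$ if $\mathsf{pop}_{\mathsf{PIFO}}(p)=(pkt,p')$; $\mathsf{pop}(\mathsf{Internal}(\vec q,p)) = (pkt,\mathsf{Internal}(\vec q[q'/i],p'))$ if $\mathsf{pop}_{\mathsf{PIFO}}(p)=(i,p')$ and $\mathsf{pop}(\vec q[i])=(pkt,q')$; undefined otherwise. Paths: $\mathsf{Path}( * )=\mathsf{Rk}$; $\mathsf{Path}(\mathsf{Node}(\vec t))$ consists of $(i,r)::pt$ with $1\le i\le n$, $r\in\mathsf{Rk}$, $pt\in\mathsf{Path}(\vec t[i])$. push: $\mathsf{push}(\mathsf{Leaf}(p),pkt,r)=\mathsf{Leaf}(\mathsf{push}_{\mathsf{PIFO}}(p,pkt,r))$; $\mathsf{push}(\mathsf{Internal}(\vec q,p),pkt,(i,r)::pt)=\mathsf{Internal}(\vec q[\mathsf{push}(\vec q[i],pkt,pt)/i],\mathsf{push}_{\mathsf{PIFO}}(p,i,r))$. Simulation: $R\subseteq\mathsf{PIFOTree}(s_1)\times\mathsf{PIFOTree}(s_2)$ is a simulation if for all $pkt$ and $q \mathrel{R} q'$: (1) if $\mathsf{pop}(q)$ is undefined so is $\mathsf{pop}(q')$; (2) if $\mathsf{pop}(q)=(pkt,q_\circ)$ then $\mathsf{pop}(q')=(pkt,q_\circ')$ with $q_\circ \mathrel{R}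 q_\circ'$; (3) for every $pt\in\mathsf{Path}(s_1)$ there is $pt'\in\mathsf{Path}(s_2)$ with $\mathsf{push}(q,pkt,pt)\mathrel{R}\mathsf{push}(q',pkt,pt')$. $q\preceq q'$ ("$q'$ simulates $q$") means some simulation relates them. Addresses and embeddings: $\mathsf{Addr}(t)\subseteq\mathbb{N}^*$ is the smallest set with $\epsilon\in\mathsf{Addr}(t)$ and $i\cdot\alpha\in\mathsf{Addr}(\mathsf{Node}(\vec t))$ for $1\le i\le n$, $\alpha\in\mathsf{Addr}(\vec t[i])$; $t/\epsilon=t$, $\mathsf{Node}(\vec t)/(i\cdot\alpha)=\vec t[i]/\alpha$. An embedding of $t_1$ in $t_2$ is an injective $f:\mathsf{Addr}(t_1)\to\mathsf{Addr}(t_2)$ with $f(\epsilon)=\epsilon$, $t_2/f(\alpha)=*$ whenever $t_1/\alpha=*$, and $\alpha$ a prefix of $\alpha'$ iff $f(\alpha)$ a prefix of $f(\alpha')$. *)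

theory Defs
  imports Main "HOL-Library.Sublist"
begin

type_synonym ('s, 'r) pifo = "('s \<times> 'r) list"

definition pifo_push :: "('s, 'r) pifo \<Rightarrow> 's \<Rightarrow> 'r \<Rightarrow> ('s, 'r) pifo" where
  "pifo_push p s r = p @ [(s, r)]"

definition pifo_pop :: "('s, 'r::linorder) pifo \<Rightarrow> ('s \<times> ('s, 'r) pifo) option" where
  "pifo_pop p = (if p = [] then None else
     (let m = Min (snd ` set p);
          i = (LEAST i. i < length p \<and> snd (p ! i) = m)
      in Some (fst (p ! i), take i p @ drop (Suc i) p)))"

datatype topo = Star | Node "topo list"

fun leaves :: "topo \<Rightarrow> nat" where
  "leaves Star = 1"
| "leaves (Node ts) = sum_list (map leaves ts)"

text \<open>Children of an internal node are indexed 1..n (stored at list positions 0..n-1).\<close>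
datatype ('p, 'r) ptree =
    Leaf "('p, 'r) pifo"
  | Internal "('p, 'r) ptree list" "(nat, 'r) pifo"

inductive ptree_of :: "topo \<Rightarrow> ('p, 'r) ptree \<Rightarrow> bool" where
  leaf: "ptree_of Star (Leaf p)"
| internal: "\<lbrakk> length qs = length ts;
              \<forall>i < length ts. ptree_of (ts ! i) (qs ! i);
              \<forall>(i, r) \<in> set p. 1 \<le> i \<and> i \<le> length ts \<rbrakk>
             \<Longrightarrow> ptree_of (Node ts) (Internal qs p)"

lemma size_nth_less:
  "k < length qs \<Longrightarrow> size (qs ! k) < Suc (size_list size qs)"
  using size_list_estimation'[of "qs ! k" qs "size (qs ! k)" size] nth_mem[of k qs]
  by simp

function pop :: "('p, 'r::linorder) ptree \<Rightarrow> ('p \<times> ('p, 'r) ptree) option" where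
  "pop (Leaf p) = (case pifo_pop p of None \<Rightarrow> None | Some (pkt, p') \<Rightarrow> Some (pkt, Leaf p'))"
| "pop (Internal qs p) = (case pifo_pop p of None \<Rightarrow> None
     | Some (i, p') \<Rightarrow>
         (if 1 \<le> i \<and> i \<le> length qs then
            (case pop (qs ! (i - 1)) of None \<Rightarrow> None
             | Some (pkt, q') \<Rightarrow> Some (pkt, Internal (qs[i - 1 := q']) p'))
          else None))"
  by pat_completeness auto
termination
  apply (relation "measure size")
   apply simp
  apply clarsimp
  subgoal for qs p i
  proof -
    assume "Suc 0 \<le> i" "i \<le> length qs"
    then have "i - Suc 0 < length qs" by simp
    then have "size (qs ! (i - Suc 0)) < Suc (size_list size qs)" by (rule size_nth_less)
    then show ?thesis by linarith
  qed
  done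

datatype 'r path = PLeaf 'r | PStep nat 'r "'r path"

inductive path_of :: "topo \<Rightarrow> 'r path \<Rightarrow> bool" where
  "path_of Star (PLeaf r)"
| "\<lbrakk> 1 \<le> i; i \<le> length ts; path_of (ts ! (i - 1)) pt \<rbrakk> \<Longrightarrow> path_of (Node ts) (PStep i r pt)"

text \<open>push on a well-typed path; on ill-typed arguments it is left unchanged (never used).\<close>
fun push :: "('p, 'r) ptree \<Rightarrow> 'p \<Rightarrow> 'r path \<Rightarrow> ('p, 'r) ptree" where
  "push (Leaf p) pkt (PLeaf r) = Leaf (pifo_push p pkt r)"
| "push (Internal qs p) pkt (PStep i r pt) =
     Internal (qs[i - 1 := push (qs ! (i - 1)) pkt pt]) (pifo_push p i r)"
| "push q pkt pt = q"

definition is_simulation ::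
  "topo \<Rightarrow> topo \<Rightarrow> (('p, 'r::linorder) ptree \<Rightarrow> ('p, 'r) ptree \<Rightarrow> bool) \<Rightarrow> bool" where
  "is_simulation s1 s2 R \<longleftrightarrow>
     (\<forall>q q'. R q q' \<longrightarrow> ptree_of s1 q \<and> ptree_of s2 q') \<and>
     (\<forall>q q'. R q q' \<longrightarrow>
        (pop q = None \<longrightarrow> pop q' = None) \<and>
        (\<forall>pkt q0. pop q = Some (pkt, q0) \<longrightarrow> (\<exists>q0'. pop q' = Some (pkt, q0') \<and> R q0 q0')) \<and>
        (\<forall>pkt pt. path_of s1 pt \<longrightarrow>
           (\<exists>pt'. path_of s2 pt' \<and> R (push q pkt pt) (push q' pkt pt'))))"

text \<open>simulated_by s1 s2 q q' means q \<preceq> q', i.e. q' (of topology s2) simulates q (of topology s1).\<close>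
definition simulated_by ::
  "topo \<Rightarrow> topo \<Rightarrow> ('p, 'r::linorder) ptree \<Rightarrow> ('p, 'r) ptree \<Rightarrow> bool" where
  "simulated_by s1 s2 q q' \<longleftrightarrow> (\<exists>R. is_simulation s1 s2 R \<and> R q q')"


inductive is_addr :: "topo \<Rightarrow> nat list \<Rightarrow> bool" where
  nil: "is_addr t []"
| cons: "\<lbrakk> 1 \<le> i; i \<le> length ts; is_addr (ts ! (i - 1)) a \<rbrakk> \<Longrightarrow> is_addr (Node ts) (i # a)"

definition addrs :: "topo \<Rightarrow> nat list set" where
  "addrs t = {a. is_addr t a}"

fun subtree :: "topo \<Rightarrow> nat list \<Rightarrow> topo" where
  "subtree t [] = t"
| "subtree (Node ts) (i # a) = subtree (ts ! (i - 1)) a"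
| "subtree Star (i # a) = Star"

definition embedding :: "topo \<Rightarrow> topo \<Rightarrow> (nat list \<Rightarrow> nat list) \<Rightarrow> bool" where
  "embedding t1 t2 f \<longleftrightarrow>
     f ` addrs t1 \<subseteq> addrs t2 \<and> inj_on f (addrs t1) \<and> f [] = [] \<and>
     (\<forall>a \<in> addrs t1. subtree t1 a = Star \<longrightarrow> subtree t2 (f a) = Star) \<and>
     (\<forall>a \<in> addrs t1. \<forall>a' \<in> addrs t1. prefix a a' \<longleftrightarrow> prefix (f a) (f a'))"

end

theory Submission
  imports Defs
begin

lemma pifo_pop_app:
  assumes "\<forall>e\<in>set u. r < snd e" "\<forall>e\<in>set v. r \<le> snd e"
  shows "pifo_pop (u @ (s,r) # v) = Some (s, u @ v)"
proof -
  let ?p = "u @ (s,r) # v"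
  have m: "Min (snd ` set ?p) = r"
    by (rule Min_eqI) (use assms in force)+
  have l: "(LEAST i. i < length ?p \<and> snd (?p ! i) = r) = length u"
  proof (rule Least_equality)
    show "length u < length ?p \<and> snd (?p ! length u) = r" by simp
  next
    fix y assume y: "y < length ?p \<and> snd (?p ! y) = r"
    show "length u \<le> y"
    proof (rule ccontr)
      assume "\<not> length u \<le> y"
      then have "y < length u" by simp
      then have "?p ! y = u ! y" "u ! y \<in> set u" by (simp_all add: nth_append)
      with assms(1) y show False by force
    qed
  qed
  show ?thesis unfolding pifo_pop_def Let_def m l by simp
qed

lemma pifo_pop_SomeD:
  assumes "pifo_pop p = Some (s, p')"
  shows "\<exists>u r v. p = u @ (s,r) # v \<and> p' = u @ v \<and> (\<forall>e\<in>set u. r < snd e) \<and> (\<forall>e\<in>set v. r \<le> snd e)"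
proof -
  have ne: "p \<noteq> []" using assms by (simp add: pifo_pop_def split: if_splits)
  define m where "m = Min (snd ` set p)"
  define i where "i = (LEAST i. i < length p \<and> snd (p ! i) = m)"
  have "m \<in> snd ` set p" using ne by (simp add: m_def)
  then obtain k where "k < length p" "snd (p!k) = m" by (auto simp: in_set_conv_nth)
  hence ex: "\<exists>k. k < length p \<and> snd (p!k) = m" by blast
  have i1: "i < length p \<and> snd (p!i) = m" using LeastI_ex[OF ex] unfolding i_def .
  have i2: "\<forall>k<i. snd (p!k) \<noteq> m"
  proof (intro allI impI)
    fix k assume "k < i"
    then have "\<not> (k < length p \<and> snd (p ! k) = m)"
      unfolding i_def by (rule not_less_Least)
    moreover have "k < length p" using \<open>k < i\<close> i1 by simp
    ultimately show "snd (p!k) \<noteq> m" by simp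
  qed
  have mle: "\<forall>e\<in>set p. m \<le> snd e" by (simp add: m_def)
  have res: "pifo_pop p = Some (fst (p!i), take i p @ drop (Suc i) p)"
    using ne unfolding pifo_pop_def Let_def i_def m_def by simp
  with assms have s: "s = fst (p!i)" and p': "p' = take i p @ drop (Suc i) p" by auto
  have pi: "p ! i = (s, m)" using s i1 by (metis prod.collapse)
  have dec: "p = take i p @ (s,m) # drop (Suc i) p" using i1 pi by (metis id_take_nth_drop)
  have u: "\<forall>e\<in>set (take i p). m < snd e"
  proof
    fix e assume "e \<in> set (take i p)"
    then obtain k where k: "k < length (take i p)" "e = take i p ! k" by (auto simp: in_set_conv_nth)
    then have "k < i" "e = p ! k" "k < length p" by auto
    then show "m < snd e" using i2 mle nth_mem by (metis order_le_neq_trans)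
  qed
  have v: "\<forall>e\<in>set (drop (Suc i) p). m \<le> snd e" using mle set_drop_subset by fast
  show ?thesis using dec p' u v by blast
qed

lemma pifo_pop_snoc:
  assumes "pifo_pop p = Some (s, p')"
  shows "pifo_pop (p @ [e]) = Some (s, p' @ [e]) \<or> pifo_pop (p @ [e]) = Some (fst e, p)"
proof -
  obtain u r v where d: "p = u @ (s,r) # v" "p' = u @ v" "\<forall>e\<in>set u. r < snd e" "\<forall>e\<in>set v. r \<le> snd e"
    using pifo_pop_SomeD[OF assms] by blast
  show ?thesis
  proof (cases "r \<le> snd e")
    case True
    then have "pifo_pop (u @ (s,r) # (v @ [e])) = Some (s, u @ v @ [e])"
      using d by (intro pifo_pop_app) auto
    thus ?thesis using d by simp
  next
    case False
    have "\<forall>x\<in>set p. snd e < snd x" using d False by auto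
    then have "pifo_pop (p @ (fst e, snd e) # []) = Some (fst e, p @ [])"
      by (intro pifo_pop_app) auto
    thus ?thesis by simp
  qed
qed


lemma ptree_of_Star: "ptree_of Star q \<longleftrightarrow> (\<exists>l. q = Leaf l)"
  by (auto elim: ptree_of.cases intro: ptree_of.intros)

lemma ptree_of_Node: "ptree_of (Node ts) q \<longleftrightarrow> (\<exists>qs p. q = Internal qs p \<and> length qs = length ts \<and>
   (\<forall>i<length ts. ptree_of (ts!i) (qs!i)) \<and> (\<forall>(i, r) \<in> set p. 1 \<le> i \<and> i \<le> length ts))"
  by (auto elim: ptree_of.cases intro!: ptree_of.internal)

lemma path_of_Star: "path_of Star pt \<longleftrightarrow> (\<exists>r. pt = PLeaf r)"
  by (auto elim: path_of.cases intro: path_of.intros)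

lemma path_of_Node: "path_of (Node ts) pt \<longleftrightarrow> (\<exists>i r pt0. pt = PStep i r pt0 \<and> 1 \<le> i \<and> i \<le> length ts \<and> path_of (ts!(i-1)) pt0)"
  by (auto elim: path_of.cases intro: path_of.intros)

lemma pop_Leaf_Some: "pop (Leaf l) = Some (pkt, q) \<longleftrightarrow> (\<exists>l'. pifo_pop l = Some (pkt, l') \<and> q = Leaf l')"
  by (auto split: option.splits)

lemma pop_Internal_Some: "pop (Internal qs p) = Some (pkt, q) \<longleftrightarrow>
  (\<exists>i p' q'. pifo_pop p = Some (i,p') \<and> 1 \<le> i \<and> i \<le> length qs \<and> pop (qs!(i-1)) = Some (pkt,q') \<and> q = Internal (qs[i-1 := q']) p')"
  by (auto split: option.splits if_splits)

lemma flat: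
  assumes wt: "ptree_of (Node ts) S" and stars: "\<forall>t\<in>set ts. t = Star"
    and p1: "pop S = Some (y, S')" and pth: "path_of (Node ts) pt"
    and p2: "pop (push S w pt) = Some (x, T)" and p3: "pop T = Some (c, T')"
  shows "x = y \<or> x = w \<or> c = y \<or> c = w"
proof -
  from wt obtain qs p where S: "S = Internal qs p" and len: "length qs = length ts"
    and ch: "\<forall>k<length ts. ptree_of (ts!k) (qs!k)" by (auto simp: ptree_of_Node)
  have leafk: "\<forall>k<length qs. \<exists>l. qs!k = Leaf l" using ch stars len by (metis nth_mem ptree_of_Star)
  from pth stars obtain j r r' where pt: "pt = PStep j r (PLeaf r')" and j: "1 \<le> j" "j \<le> length qs"
  proof -
    from pth obtain i r pt0 where "pt = PStep i r pt0" "1 \<le> i" "i \<le> length ts" "path_of (ts!(i-1)) pt0"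
      by (auto simp: path_of_Node)
    moreover have "ts!(i-1) = Star" using stars \<open>1 \<le> i\<close> \<open>i \<le> length ts\<close> by simp
    ultimately show ?thesis using that len by (auto simp: path_of_Star)
  qed
  obtain lj where lj: "qs!(j-1) = Leaf lj" using leafk j by (metis Suc_le_eq Suc_pred' less_le_trans zero_less_one)
  from p1 S obtain i p' q' where pi: "pifo_pop p = Some (i,p')" "1\<le>i" "i\<le>length qs" "pop (qs!(i-1)) = Some (y,q')"
    by (auto simp: pop_Internal_Some simp del: pop.simps)
  obtain l where l: "qs!(i-1) = Leaf l" using leafk pi by (metis Suc_le_eq Suc_pred' less_le_trans zero_less_one)
  then obtain l' where pl: "pifo_pop l = Some (y, l')" using pi(4) by (auto simp: pop_Leaf_Some simp del: pop.simps)
  have jl: "j - 1 < length qs" using j by simp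
  have il: "i - 1 < length qs" using pi by simp
  have push: "push S w pt = Internal (qs[j-1 := Leaf (lj @ [(w,r')])]) (p @ [(j,r)])"
    using lj by (simp add: S pt pifo_push_def)
  from pifo_pop_snoc[OF pi(1), of "(j,r)"]
  consider (A) "pifo_pop (p@[(j,r)]) = Some (i, p'@[(j,r)])" | (B) "pifo_pop (p@[(j,r)]) = Some (j, p)" by auto
  then show ?thesis
  proof cases
    case A
    obtain q'' where x: "pop ((qs[j - 1 := Leaf (lj @ [(w, r')])]) ! (i - 1)) = Some (x, q'')"
      using p2 push A pi by (auto simp: pop_Internal_Some simp del: pop.simps)
    show ?thesis
    proof (cases "i = j")
      case True
      then have "lj = l" using l lj by simp
      with x True jl obtain L where "pifo_pop (l @ [(w,r')]) = Some (x, L)"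
        by (auto simp: pop_Leaf_Some simp del: pop.simps)
      then show ?thesis using pifo_pop_snoc[OF pl, of "(w,r')"] by auto
    next
      case False
      then have "i - 1 \<noteq> j - 1" using j pi by simp
      then have "pop (qs ! (i - 1)) = Some (x, q'')" using x by simp
      then show ?thesis using pi(4) by simp
    qed
  next
    case B
    from p2 push B jl obtain L'' where Lx: "pifo_pop (lj@[(w,r')]) = Some (x, L'')"
      and T: "T = Internal (qs[j-1 := Leaf L'']) p"
      by (auto simp: pop_Internal_Some pop_Leaf_Some simp del: pop.simps)
    from p3 T pi(1) obtain q3 where c3: "pop ((qs[j-1 := Leaf L''])!(i-1)) = Some (c, q3)"
      by (auto simp: pop_Internal_Some simp del: pop.simps)
    show ?thesis
    proof (cases "i = j")
      case True
      then have "lj = l" using l lj by simp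
      from pifo_pop_snoc[OF pl, of "(w,r')"] Lx \<open>lj = l\<close>
      have "x = y \<or> L'' = l" by auto
      moreover have "L'' = l \<Longrightarrow> c = y" using c3 True jl pl by (auto simp: pop_Leaf_Some simp del: pop.simps)
      ultimately show ?thesis by blast
    next
      case False
      then have "i - 1 \<noteq> j - 1" using j pi by simp
      then have "pop (qs ! (i - 1)) = Some (c, q3)" using c3 by simp
      then show ?thesis using pi(4) by simp
    qed
  qed
qed


lemma is_addr_Nil: "is_addr t []" by (rule is_addr.nil)

lemma is_addr_Star: "is_addr Star (i # a) \<longleftrightarrow> False"
  by (auto elim: is_addr.cases)

lemma is_addr_Node: "is_addr (Node ts) (i # a) \<longleftrightarrow> 1 \<le> i \<and> i \<le> length ts \<and> is_addr (ts!(i-1)) a"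
  by (auto elim: is_addr.cases intro: is_addr.intros)

lemma is_addr_Star': "is_addr Star a \<longleftrightarrow> a = []"
  by (cases a) (auto simp: is_addr_Nil is_addr_Star)

lemma addrs_T1: "addrs (Node [Star,Star,Star]) = {[],[1],[2],[3]}"
proof -
  have "is_addr (Node [Star,Star,Star]) a \<longleftrightarrow> a \<in> {[],[1],[2],[3]}" for a
  proof (cases a)
    case Nil then show ?thesis by (simp add: is_addr_Nil)
  next
    case (Cons i b)
    have "is_addr (Node [Star,Star,Star]) (i # b) \<longleftrightarrow> (i = 1 \<or> i = 2 \<or> i = 3) \<and> b = []"
    proof -
      have "1 \<le> i \<and> i \<le> 3 \<longleftrightarrow> (i = 1 \<or> i = 2 \<or> i = (3::nat))" by auto
      moreover have "1 \<le> i \<Longrightarrow> i \<le> 3 \<Longrightarrow> [Star,Star,Star] ! (i - 1) = Star"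
        by (cases "i - 1") (auto simp: nth_Cons split: nat.splits)
      ultimately show ?thesis by (auto simp: is_addr_Node is_addr_Star')
    qed
    then show ?thesis using Cons by auto
  qed
  then show ?thesis unfolding addrs_def by auto
qed

definition femb :: "nat list \<Rightarrow> nat list" where
  "femb a = (if a = [1] then [1,1] else if a = [2] then [1,2] else if a = [3] then [2] else a)"

lemma embedding_T1_T2: "embedding (Node [Star,Star,Star]) (Node [Node [Star,Star], Star]) femb"
  unfolding embedding_def addrs_T1
  by (auto simp: femb_def addrs_def is_addr_Nil is_addr_Node is_addr_Star inj_on_def)

lemma finite_lower:
  fixes S :: "'r::{linorder,no_bot} set"
  assumes "finite S"
  shows "\<exists>b. \<forall>s\<in>S. b < s"
proof (cases "S = {}")
  case True then show ?thesis by simp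
next
  case False
  obtain b where "b < Min S" using lt_ex by blast
  then show ?thesis using assms False by (meson Min_le less_le_trans)
qed

lemma sim_push:
  assumes "is_simulation s1 s2 R" "R q q'" "path_of s1 pt"
  shows "\<exists>pt'. path_of s2 pt' \<and> R (push q pkt pt) (push q' pkt pt')"
  using assms unfolding is_simulation_def by blast

lemma sim_pop:
  assumes "is_simulation s1 s2 R" "R q q'" "pop q = Some (pkt, q0)"
  shows "\<exists>q0'. pop q' = Some (pkt, q0') \<and> R q0 q0'"
  using assms unfolding is_simulation_def by blast

lemma sim_wt:
  assumes "is_simulation s1 s2 R" "R q q'"
  shows "ptree_of s2 q'"
  using assms unfolding is_simulation_def by blast


theorem proposition5p13:
  assumes "infinite (UNIV :: 'p set)"
  shows "\<exists>t1 t2. (\<exists>f. embedding t1 t2 f) \<and> leaves t1 = leaves t2 \<and>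
    (\<forall>(q1 :: ('p, 'r :: {linorder, no_bot, no_top}) ptree) (q2 :: ('p, 'r) ptree).
       ptree_of t1 q1 \<longrightarrow> ptree_of t2 q2 \<longrightarrow> \<not> simulated_by t2 t1 q2 q1)"
proof -
  fix x :: 'p
  obtain y :: 'p where y: "y \<notin> {x}" using ex_new_if_finite[OF assms, of "{x}"] by auto
  obtain c :: 'p where c: "c \<notin> {x,y}" using ex_new_if_finite[OF assms, of "{x,y}"] by auto
  obtain w :: 'p where w: "w \<notin> {x,y,c}" using ex_new_if_finite[OF assms, of "{x,y,c}"] by auto
  let ?T1 = "Node [Star,Star,Star]"
  let ?T2 = "Node [Node [Star,Star], Star]"
  have main: "\<not> simulated_by ?T2 ?T1 q2 q1"
    if wt1: "ptree_of ?T1 q1" and wt2: "ptree_of ?T2 q2"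
    for q1 :: "('p, 'r :: {linorder, no_bot, no_top}) ptree" and q2 :: "('p, 'r) ptree"
  proof
    assume "simulated_by ?T2 ?T1 q2 q1"
    then obtain R where isR: "is_simulation ?T2 ?T1 R" and R0: "R q2 q1"
      unfolding simulated_by_def by blast
    from wt2 obtain l11 l12 l2 p0 p1 where
      q2: "q2 = Internal [Internal [Leaf l11, Leaf l12] p1, Leaf l2] p0"
    proof -
      from wt2 obtain qs p0 where A: "q2 = Internal qs p0" "length qs = 2"
        "\<forall>i<2. ptree_of ([Node [Star,Star], Star]!i) (qs!i)"
        unfolding ptree_of_Node by auto
      from A(2) obtain qa qb where qs: "qs = [qa,qb]"
        by (auto simp: length_Suc_conv numeral_2_eq_2)
      have wa: "ptree_of (Node [Star,Star]) qa" using A(3)[rule_format, of 0] qs by simp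
      have wb: "ptree_of Star qb" using A(3)[rule_format, of 1] qs by simp
      then obtain l2 where qb: "qb = Leaf l2" by (auto simp: ptree_of_Star)
      from wa obtain qs' p1 where B: "qa = Internal qs' p1" "length qs' = 2"
        "\<forall>i<2. ptree_of ([Star,Star]!i) (qs'!i)"
        unfolding ptree_of_Node by auto
      from B(2) obtain qc qd where qs': "qs' = [qc,qd]"
        by (auto simp: length_Suc_conv numeral_2_eq_2)
      have "ptree_of Star qc" using B(3)[rule_format, of 0] qs' by simp
      then obtain l11 where qc: "qc = Leaf l11" by (auto simp: ptree_of_Star)
      have "ptree_of Star qd" using B(3)[rule_format, of 1] qs' by simp
      then obtain l12 where qd: "qd = Leaf l12" by (auto simp: ptree_of_Star)
      show ?thesis using that A(1) qs qb B(1) qs' qc qd by blast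
    qed
    define F where "F = snd ` set p0 \<union> snd ` set p1 \<union> snd ` set l11 \<union> snd ` set l12 \<union> snd ` set l2"
    have "finite F" unfolding F_def by simp
    then obtain b where b: "\<forall>s\<in>F. b < s" using finite_lower by blast
    obtain a where ab: "a < b" using lt_ex by blast
    have aF: "\<forall>r\<in>F. a < r" using b ab by (meson less_trans)
    have F0: "snd e \<in> F" if "e \<in> set p0" for e using that unfolding F_def by blast
    have F1: "snd e \<in> F" if "e \<in> set p1" for e using that unfolding F_def by blast
    have F11: "snd e \<in> F" if "e \<in> set l11" for e using that unfolding F_def by blast
    have F12: "snd e \<in> F" if "e \<in> set l12" for e using that unfolding F_def by blast
    have F2: "snd e \<in> F" if "e \<in> set l2" for e using that unfolding F_def by blast
    have jp0: "\<forall>e\<in>set p0. a < snd e" "\<forall>e\<in>set p0. b < snd e" using aF b F0 by blast+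
    have jp1: "\<forall>e\<in>set p1. a < snd e" "\<forall>e\<in>set p1. b < snd e" using aF b F1 by blast+
    have jl11: "\<forall>e\<in>set l11. a < snd e" "\<forall>e\<in>set l11. b < snd e" using aF b F11 by blast+
    have jl12: "\<forall>e\<in>set l12. a < snd e" using aF F12 by blast
    have jl2: "\<forall>e\<in>set l2. a < snd e" using aF F2 by blast
    define py where "py = PStep 1 a (PStep 2 b (PLeaf a))"
    define pc where "pc = PStep 2 a (PLeaf a)"
    define px where "px = PStep 1 a (PStep 1 b (PLeaf a))"
    define pw where "pw = PStep 1 a (PStep 1 a (PLeaf b))"
    have pths: "path_of ?T2 py" "path_of ?T2 pc" "path_of ?T2 px" "path_of ?T2 pw"
      unfolding py_def pc_def px_def pw_def by (auto simp: path_of_Node path_of_Star)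
    obtain py' where py': "path_of ?T1 py'" "R (push q2 y py) (push q1 y py')"
      using sim_push[OF isR R0 pths(1)] by blast
    obtain pc' where pc': "path_of ?T1 pc'" "R (push (push q2 y py) c pc) (push (push q1 y py') c pc')"
      using sim_push[OF isR py'(2) pths(2)] by blast
    define Q2 where "Q2 = push (push (push q2 y py) c pc) x px"
    obtain px' where px': "path_of ?T1 px'" "R Q2 (push (push (push q1 y py') c pc') x px')"
      using sim_push[OF isR pc'(2) pths(3)] unfolding Q2_def by blast
    define Q1 where "Q1 = push (push (push q1 y py') c pc') x px'"
    have RQ: "R Q2 Q1" using px' Q1_def by simp
    have wtQ1: "ptree_of ?T1 Q1" using sim_wt[OF isR RQ] .
    have Q2e: "Q2 = Internal [Internal [Leaf (l11@[(x,a)]), Leaf (l12@[(y,a)])] (p1@[(2,b),(1,b)]), Leaf (l2@[(c,a)])] (p0@[(1,a),(2,a),(1,a)])"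
      unfolding Q2_def q2 py_def pc_def px_def by (simp add: pifo_push_def)
    have h1: "pifo_pop (p0@[(1,a),(2,a),(1,a)]) = Some (1, p0@[(2,a),(1,a)])"
      using pifo_pop_app[of p0 a "[(2,a),(1,a)]" "1::nat"] jp0 by simp
    have h2: "pifo_pop (p1@[(2,b),(1,b)]) = Some (2, p1@[(1,b)])"
      using pifo_pop_app[of p1 b "[(1,b)]" "2::nat"] jp1 by simp
    have h3: "pifo_pop (l12@[(y,a)]) = Some (y, l12)"
      using pifo_pop_app[of l12 a "[]" y] jl12 by simp
    have "\<exists>Q2'. pop Q2 = Some (y, Q2')" unfolding Q2e using h1 h2 h3 by simp
    then obtain Q2' where "pop Q2 = Some (y, Q2')" by blast
    from sim_pop[OF isR RQ this] obtain Q1' where popQ1: "pop Q1 = Some (y, Q1')" by blast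
    obtain pw' where pw': "path_of ?T1 pw'" "R (push Q2 w pw) (push Q1 w pw')"
      using sim_push[OF isR RQ pths(4)] by blast
    have W2e: "push Q2 w pw = Internal [Internal [Leaf (l11@[(x,a),(w,b)]), Leaf (l12@[(y,a)])] (p1@[(2,b),(1,b),(1,a)]), Leaf (l2@[(c,a)])] (p0@[(1,a),(2,a),(1,a),(1,a)])"
      unfolding Q2e pw_def by (simp add: pifo_push_def)
    have g1: "pifo_pop (p0@[(1,a),(2,a),(1,a),(1,a)]) = Some (1, p0@[(2,a),(1,a),(1,a)])"
      using pifo_pop_app[of p0 a "[(2,a),(1,a),(1,a)]" "1::nat"] jp0 by simp
    have g2: "pifo_pop (p1@[(2,b),(1,b),(1,a)]) = Some (1, p1@[(2,b),(1,b)])"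
      using pifo_pop_app[of "p1@[(2,b),(1,b)]" a "[]" "1::nat"] jp1 ab by simp
    have g3: "pifo_pop (l11@[(x,a),(w,b)]) = Some (x, l11@[(w,b)])"
      using pifo_pop_app[of l11 a "[(w,b)]" x] jl11 ab by simp
    have g4: "pifo_pop (p0@[(2,a),(1,a),(1,a)]) = Some (2, p0@[(1,a),(1,a)])"
      using pifo_pop_app[of p0 a "[(1,a),(1,a)]" "2::nat"] jp0 by simp
    have g5: "pifo_pop (l2@[(c,a)]) = Some (c, l2)"
      using pifo_pop_app[of l2 a "[]" c] jl2 by simp
    define U2 where "U2 = Internal [Internal [Leaf (l11@[(w,b)]), Leaf (l12@[(y,a)])] (p1@[(2,b),(1,b)]), Leaf (l2@[(c,a)])] (p0@[(2,a),(1,a),(1,a)])"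
    have "pop (push Q2 w pw) = Some (x, U2)" unfolding W2e U2_def using g1 g2 g3 by simp
    from sim_pop[OF isR pw'(2) this] obtain U1 where U1: "pop (push Q1 w pw') = Some (x, U1)" "R U2 U1" by blast
    have "\<exists>V2. pop U2 = Some (c, V2)" unfolding U2_def using g4 g5 by simp
    then obtain V2 where "pop U2 = Some (c, V2)" by blast
    from sim_pop[OF isR U1(2) this] obtain V1 where V1: "pop U1 = Some (c, V1)" by blast
    have "x = y \<or> x = w \<or> c = y \<or> c = w"
      by (rule flat[OF wtQ1 _ popQ1 pw'(1) U1(1) V1]) simp
    then show False using y c w by auto
  qed
  show ?thesis
    apply (rule exI[of _ ?T1], rule exI[of _ ?T2])
    using embedding_T1_T2 main by auto
qed

end
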